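(* In the two-bidder, two-configuration asymmetric setting below, assume $0<p<1$, $r_1>0$, and additionally $r'_1\ge r'_2$ (uniform winner), $r_2\ge r'_2$ (congruent loser) and $r_2\le\mu_1$ (weak competition). Then every calibrated information structure has revenue at most $$\frac{p\,r_1r_2+(1-p)\,r'_1r'_2}{\mu_1},$$ and, when $r_2<\mu_1$, this bound is attained by the calibrated information structure that fully bundles the winner and unbundles the loser, i.e. which sends $s=(\mu_1,r_2)$ when the CTR vector is $(r_1,r_2)$ and $s=(\mu_1,r'_2)$ when it is $(r'_1,r'_2)$.
   Context: Setting. Two bidders with values $v_1=v_2=1$. The CTR vector equals $(r_1,r_2)$ with probability $p$ and $(r'_1,r'_2)$ with probability $1-p$, all entries in $[0,1]$, labeled so that $r_1\ge r'_1$, $r_1\ge r_2$, $r_1\ge r'_2$. Let $\mu_1=pr_1+(1-p)r'_1$. An information structure is a finitely supported probability distribution on pairs $(r,s)\in[0,1]^2\times[0,1]^2$ whose $r$-marginal is this prior. Given signals $s$, the winner $i^*$ maximizes $s_i$ (uniform tie-breaking), pays per click $s_j/s_{i^*}$ with $j\ne i^*$ (revenue $0$ if $s_{i^*}=0$), only upon a click, which occurs with probability $r_{i^*}$; revenue is $\mathbb{E}[r_{i^*}p_{i^*}]$. Calibrated: $\mathbb{E}[r_i\mid s_i=t]=t$ for every $i$ and every $t$ with $\Pr[s_i=t]>0$. *)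

theory Defs
  imports "HOL-Probability.Probability"
begin

text \<open>A point of an information structure is a pair (r, s) where r = (r_1, r_2) is the
CTR vector and s = (s_1, s_2) the signal vector.\<close>

type_synonym point = "(real \<times> real) \<times> (real \<times> real)"

definition coord :: "nat \<Rightarrow> real \<times> real \<Rightarrow> real" where
  "coord i x = (if i = 1 then fst x else snd x)"

definition prior :: "real \<Rightarrow> real \<Rightarrow> real \<Rightarrow> real \<Rightarrow> real \<Rightarrow> (real \<times> real) pmf" where
  "prior p r1 r2 r1' r2' =
     map_pmf (\<lambda>b. if b then (r1, r2) else (r1', r2')) (bernoulli_pmf p)"

definition info_structure :: "(real \<times> real) pmf \<Rightarrow> point pmf \<Rightarrow> bool" where
  "info_structure P I \<longleftrightarrow>
     finite (set_pmf I) \<and>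
     (\<forall>((a, b), (c, d)) \<in> set_pmf I.
        a \<in> {0..1} \<and> b \<in> {0..1} \<and> c \<in> {0..1} \<and> d \<in> {0..1}) \<and>
     map_pmf fst I = P"

definition calibrated :: "point pmf \<Rightarrow> bool" where
  "calibrated I \<longleftrightarrow>
     (\<forall>i \<in> {1::nat, 2}. \<forall>t::real.
        measure_pmf.prob I {x. coord i (snd x) = t} > 0 \<longrightarrow>
        measure_pmf.expectation (cond_pmf I {x. coord i (snd x) = t}) (\<lambda>x. coord i (fst x)) = t)"

text \<open>Expected revenue at a realization (r, s): highest signal wins (uniform tie-breaking),
pays s_j / s_winner per click, clicks with probability r_winner; revenue 0 if the winning
signal is 0.\<close>
definition outcome_revenue :: "real \<times> real \<Rightarrow> real \<times> real \<Rightarrow> real" where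
  "outcome_revenue r s =
     (let (r1, r2) = r; (s1, s2) = s in
      if s1 > s2 then (if s1 = 0 then 0 else r1 * (s2 / s1))
      else if s2 > s1 then (if s2 = 0 then 0 else r2 * (s1 / s2))
      else (if s1 = 0 then 0 else (r1 * (s2 / s1) + r2 * (s1 / s2)) / 2))"

definition revenue :: "point pmf \<Rightarrow> real" where
  "revenue I = measure_pmf.expectation I (\<lambda>(r, s). outcome_revenue r s)"

end

theory Submission
  imports Defs
begin

lemma exp_fin:
  "finite (set_pmf I) \<Longrightarrow> measure_pmf.expectation I f = (\<Sum>x\<in>set_pmf I. pmf I x * f x)"
  by (subst integral_measure_pmf_real[of "set_pmf I"]) (auto simp: mult.commute)

lemma calib_point:
  assumes fin: "finite (set_pmf I)" and cal: "calibrated I" and i: "i \<in> {1,2}"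
  shows "(\<Sum>x\<in>{x\<in>set_pmf I. coord i (snd x) = t}. pmf I x * (coord i (fst x) - t)) = 0"
proof (cases "{x\<in>set_pmf I. coord i (snd x) = t} = {}")
  case True show ?thesis by (simp only: True sum.empty)
next
  case False
  define Ev :: "point set" where "Ev = {x. coord i (snd x) = t}"
  have ne: "set_pmf I \<inter> Ev \<noteq> {}" using False unfolding Ev_def by blast
  then obtain x0 where "x0 \<in> set_pmf I" "x0 \<in> Ev" by blast
  then have pos: "measure_pmf.prob I Ev > 0" by (rule measure_pmf_posI)
  have ce: "measure_pmf.expectation (cond_pmf I Ev) (\<lambda>x. coord i (fst x)) = t"
    using cal[unfolded calibrated_def, rule_format, OF i, of t] pos unfolding Ev_def by blast
  have finE: "finite (set_pmf I \<inter> Ev)" using fin by blast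
  have "measure_pmf.expectation (cond_pmf I Ev) (\<lambda>x. coord i (fst x))
        = (\<Sum>x\<in>set_pmf I \<inter> Ev. pmf (cond_pmf I Ev) x * coord i (fst x))"
    using exp_fin[of "cond_pmf I Ev"] finE unfolding set_cond_pmf[OF ne] by blast
  also have "\<dots> = (\<Sum>x\<in>set_pmf I \<inter> Ev. (pmf I x * coord i (fst x)) / measure_pmf.prob I Ev)"
    by (intro sum.cong refl) (simp add: pmf_cond[OF ne])
  also have "\<dots> = (\<Sum>x\<in>set_pmf I \<inter> Ev. pmf I x * coord i (fst x)) / measure_pmf.prob I Ev"
    by (rule sum_divide_distrib[symmetric])
  finally have "(\<Sum>x\<in>set_pmf I \<inter> Ev. pmf I x * coord i (fst x)) / measure_pmf.prob I Ev = t"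
    using ce by simp
  then have A: "(\<Sum>x\<in>set_pmf I \<inter> Ev. pmf I x * coord i (fst x)) = t * measure_pmf.prob I Ev"
    using pos by (simp add: divide_eq_eq)
  have P: "measure_pmf.prob I Ev = (\<Sum>x\<in>set_pmf I \<inter> Ev. pmf I x)"
    using measure_Int_set_pmf[of I Ev] measure_measure_pmf_finite[OF finE] by (simp add: Int_commute)
  have eqset: "{x\<in>set_pmf I. coord i (snd x) = t} = set_pmf I \<inter> Ev" by (auto simp: Ev_def)
  have "(\<Sum>x\<in>set_pmf I \<inter> Ev. pmf I x * (coord i (fst x) - t))
      = (\<Sum>x\<in>set_pmf I \<inter> Ev. pmf I x * coord i (fst x)) - t * (\<Sum>x\<in>set_pmf I \<inter> Ev. pmf I x)"
    by (simp add: right_diff_distrib sum_subtractf sum_distrib_left mult.commute)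
  then show ?thesis unfolding eqset using A P by simp
qed

lemma calib_sum:
  assumes fin: "finite (set_pmf I)" and cal: "calibrated I" and i: "i \<in> {1,2}"
  shows "(\<Sum>x\<in>set_pmf I. pmf I x * ((coord i (fst x) - coord i (snd x)) * h (coord i (snd x)))) = 0"
proof -
  let ?c = "\<lambda>x. coord i (snd x)"
  have "(\<Sum>x\<in>set_pmf I. pmf I x * ((coord i (fst x) - ?c x) * h (?c x)))
     = (\<Sum>t\<in>?c ` set_pmf I. \<Sum>x\<in>{x\<in>set_pmf I. ?c x = t}. pmf I x * ((coord i (fst x) - ?c x) * h (?c x)))"
    by (rule sum.image_gen[OF fin])
  also have "\<dots> = (\<Sum>t\<in>?c ` set_pmf I. h t * (\<Sum>x\<in>{x\<in>set_pmf I. ?c x = t}. pmf I x * (coord i (fst x) - t)))"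
  proof (intro sum.cong refl)
    fix t assume "t \<in> ?c ` set_pmf I"
    have "(\<Sum>x\<in>{x\<in>set_pmf I. ?c x = t}. pmf I x * ((coord i (fst x) - ?c x) * h (?c x)))
        = (\<Sum>x\<in>{x\<in>set_pmf I. ?c x = t}. h t * (pmf I x * (coord i (fst x) - t)))"
      by (intro sum.cong refl) simp
    then show "(\<Sum>x\<in>{x\<in>set_pmf I. ?c x = t}. pmf I x * ((coord i (fst x) - ?c x) * h (?c x)))
        = h t * (\<Sum>x\<in>{x\<in>set_pmf I. ?c x = t}. pmf I x * (coord i (fst x) - t))"
      by (simp add: sum_distrib_left)
  qed
  also have "\<dots> = 0" using calib_point[OF fin cal i] by simp
  finally show ?thesis .
qed

lemma calib_lower:
  assumes fin: "finite (set_pmf I)" and cal: "calibrated I" and i: "i \<in> {1,2}"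
    and x0: "x0 \<in> set_pmf I" and L: "\<forall>x\<in>set_pmf I. coord i (fst x) \<ge> L"
  shows "coord i (snd x0) \<ge> L"
proof (rule ccontr)
  assume "\<not> ?thesis"
  define t where "t = coord i (snd x0)"
  have tL: "t < L" using \<open>\<not> _\<close> t_def by simp
  have "0 < (\<Sum>x\<in>{x\<in>set_pmf I. coord i (snd x) = t}. pmf I x * (coord i (fst x) - t))"
  proof (rule sum_pos2[where i=x0])
    show "finite {x\<in>set_pmf I. coord i (snd x) = t}" using fin by auto
    show "x0 \<in> {x\<in>set_pmf I. coord i (snd x) = t}" using x0 t_def by auto
    have "coord i (fst x0) \<ge> L" using L x0 by blast
    then show "0 < pmf I x0 * (coord i (fst x0) - t)" using tL pmf_positive[OF x0] by simp
    show "0 \<le> pmf I x * (coord i (fst x) - t)" if "x \<in> {x\<in>set_pmf I. coord i (snd x) = t}" for x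
    proof -
      have "coord i (fst x) \<ge> L" using L that by blast
      then show ?thesis using tL by simp
    qed
  qed
  with calib_point[OF fin cal i] show False by simp
qed

lemma calib_upper:
  assumes fin: "finite (set_pmf I)" and cal: "calibrated I" and i: "i \<in> {1,2}"
    and x0: "x0 \<in> set_pmf I" and U: "\<forall>x\<in>set_pmf I. coord i (fst x) \<le> U"
  shows "coord i (snd x0) \<le> U"
proof (rule ccontr)
  assume "\<not> ?thesis"
  define t where "t = coord i (snd x0)"
  have tL: "t > U" using \<open>\<not> _\<close> t_def by simp
  have "0 < (\<Sum>x\<in>{x\<in>set_pmf I. coord i (snd x) = t}. pmf I x * (t - coord i (fst x)))"
  proof (rule sum_pos2[where i=x0])
    show "finite {x\<in>set_pmf I. coord i (snd x) = t}" using fin by auto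
    show "x0 \<in> {x\<in>set_pmf I. coord i (snd x) = t}" using x0 t_def by auto
    have "coord i (fst x0) \<le> U" using U x0 by blast
    then show "0 < pmf I x0 * (t - coord i (fst x0))" using tL pmf_positive[OF x0] by simp
    show "0 \<le> pmf I x * (t - coord i (fst x))" if "x \<in> {x\<in>set_pmf I. coord i (snd x) = t}" for x
    proof -
      have "coord i (fst x) \<le> U" using U that by blast
      then show ?thesis using tL by simp
    qed
  qed
  also have "(\<Sum>x\<in>{x\<in>set_pmf I. coord i (snd x) = t}. pmf I x * (t - coord i (fst x)))
     = - (\<Sum>x\<in>{x\<in>set_pmf I. coord i (snd x) = t}. pmf I x * (coord i (fst x) - t))"
    by (simp add: sum_negf[symmetric] algebra_simps)
  finally show False using calib_point[OF fin cal i] by simp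
qed

lemma calib_zero:
  assumes fin: "finite (set_pmf I)" and cal: "calibrated I" and i: "i \<in> {1,2}"
    and x0: "x0 \<in> set_pmf I" and L: "\<forall>x\<in>set_pmf I. coord i (fst x) \<ge> 0"
    and z: "coord i (snd x0) = 0"
  shows "coord i (fst x0) = 0"
proof (rule ccontr)
  assume nz: "coord i (fst x0) \<noteq> 0"
  have "0 < (\<Sum>x\<in>{x\<in>set_pmf I. coord i (snd x) = 0}. pmf I x * (coord i (fst x) - 0))"
  proof (rule sum_pos2[where i=x0])
    show "finite {x\<in>set_pmf I. coord i (snd x) = 0}" using fin by auto
    show "x0 \<in> {x\<in>set_pmf I. coord i (snd x) = 0}" using x0 z by auto
    show "0 < pmf I x0 * (coord i (fst x0) - 0)" using x0 L nz pmf_positive[OF x0]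
      by (simp add: order_le_neq_trans)
    show "0 \<le> pmf I x * (coord i (fst x) - 0)" if "x \<in> {x\<in>set_pmf I. coord i (snd x) = 0}" for x
      using L that by simp
  qed
  with calib_point[OF fin cal i, of 0] show False by simp
qed

lemma prior_set: "0 < p \<Longrightarrow> p < 1 \<Longrightarrow> set_pmf (prior p r1 r2 r1' r2') = {(r1,r2),(r1',r2')}"
  by (auto simp: prior_def UNIV_bool)

lemma prior_exp: "0 \<le> p \<Longrightarrow> p \<le> 1 \<Longrightarrow>
  measure_pmf.expectation (prior p r1 r2 r1' r2') g = p * g (r1,r2) + (1-p) * g (r1',r2')"
  by (simp add: prior_def mult.commute)

lemma or_gt: "X > Y \<Longrightarrow> outcome_revenue (R1,R2) (X,Y) = (if X = 0 then 0 else R1*(Y/X))"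
  unfolding outcome_revenue_def Let_def by simp

lemma or_lt: "Y > X \<Longrightarrow> outcome_revenue (R1,R2) (X,Y) = (if Y = 0 then 0 else R2*(X/Y))"
  unfolding outcome_revenue_def Let_def by simp

lemma or_eq: "outcome_revenue (R1,R2) (X,X) = (if X = 0 then 0 else (R1*(X/X) + R2*(X/X))/2)"
  unfolding outcome_revenue_def Let_def by simp

lemma rev_bound:
  fixes R1 R2 X Y r1 r2 r1' r2' :: real
  assumes st: "(R1 = r1 \<and> R2 = r2) \<or> (R1 = r1' \<and> R2 = r2')"
    and a1: "r1' \<le> X" and a2: "X \<le> r1" and a3: "r2' \<le> Y" and a4: "Y \<le> r2"
    and a5: "0 \<le> r2'" and a6: "r2' \<le> r1'" and a7: "r2 \<le> r1" and a8: "0 < r1"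
    and z: "X = 0 \<Longrightarrow> R1 = 0"
  shows "outcome_revenue (R1,R2) (X,Y) \<le> R1*R2/X + Y - R2"
proof (cases "X = 0")
  case True
  then have R10: "R1 = 0" using z by simp
  then have "R1 = r1' \<and> R2 = r2'" using st a8 by auto
  then have R2: "R2 = 0" using R10 a5 a6 by auto
  have Y0: "Y \<ge> 0" using a3 a5 by linarith
  have "outcome_revenue (R1,R2) (X,Y) = 0"
  proof (cases "Y = 0")
    case True then show ?thesis using \<open>X = 0\<close> or_eq[of R1 R2 0] by simp
  next
    case False then have "Y > X" using Y0 \<open>X = 0\<close> by linarith
    then show ?thesis using or_lt[of X Y R1 R2] \<open>X = 0\<close> by simp
  qed
  then show ?thesis using True R2 R10 Y0 by simp
next
  case False
  then have Xp: "X > 0" using a1 a5 a6 by linarith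
  have r20: "0 \<le> r2" using a3 a4 a5 by linarith
  have R21: "R2 \<le> R1" "R2 \<ge> 0" "R1 \<ge> 0" using st a5 a6 a7 a8 r20 by auto
  have key: "(R1 - X) * (Y - R2) \<le> 0"
  proof (cases "R1 = r1 \<and> R2 = r2")
    case True then show ?thesis using a2 a4 by (simp add: mult_nonneg_nonpos)
  next
    case False then have "R1 = r1' \<and> R2 = r2'" using st by auto
    then show ?thesis using a1 a3 by (simp add: mult_nonpos_nonneg)
  qed
  have b2: "R1*Y/X \<le> R1*R2/X + Y - R2"
  proof -
    have "R1*R2/X + Y - R2 - R1*Y/X = - ((R1 - X)*(Y - R2))/X" using Xp by (simp add: field_simps)
    moreover have "- ((R1 - X)*(Y - R2))/X \<ge> 0" using key Xp by (simp add: divide_nonpos_pos)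
    ultimately show ?thesis by linarith
  qed
  have b1: "outcome_revenue (R1,R2) (X,Y) \<le> R1*Y/X"
  proof -
    consider "X > Y" | "Y > X" | "X = Y" by linarith
    then show ?thesis
    proof cases
      case 1 then show ?thesis using Xp or_gt[of Y X R1 R2] by simp
    next
      case 2
      have q1: "X/Y \<le> 1" "Y/X \<ge> 1" "X/Y \<ge> 0" using 2 Xp by simp_all
      have "R2*(X/Y) \<le> R1 * 1" using mult_mono[of R2 R1 "X/Y" 1] R21 q1 by simp
      also have "R1 * 1 \<le> R1*(Y/X)" using mult_left_mono[OF q1(2) R21(3)] .
      finally show ?thesis using 2 Xp or_lt[of X Y R1 R2] by simp
    next
      case 3 then show ?thesis using Xp R21 or_eq[of R1 R2 X] by simp
    qed
  qed
  from b1 b2 show ?thesis by linarith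
qed

lemma ratio_bound:
  fixes R1 R2 X r1 r2 r1' r2' \<alpha> \<beta> \<mu> :: real
  assumes st: "(R1 = r1 \<and> R2 = r2) \<or> (R1 = r1' \<and> R2 = r2')"
    and a1: "r1' \<le> X" and a2: "r1' < r1" and a3: "0 \<le> r2'" and a4: "r2' \<le> r2" and a5: "0 \<le> r1'"
    and mu: "\<mu> > 0"
    and z: "X = 0 \<Longrightarrow> R1 = 0 \<and> r1' = 0"
    and bdef: "\<beta> = (r1*r2 - r1'*r2')/(r1-r1')" and adef: "\<alpha> = r1'*(r2' - \<beta>)"
  shows "R1*R2/X \<le> \<alpha>*(2/\<mu> - X/\<mu>^2) + \<beta> + \<beta>*((R1 - X)*(1/X))"
proof -
  have "\<beta> - r2' = r1*(r2-r2')/(r1-r1')" unfolding bdef using a2 by (simp add: field_simps)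
  moreover have "r1*(r2-r2')/(r1-r1') \<ge> 0" using a2 a4 a5 by simp
  ultimately have bge: "\<beta> \<ge> r2'" by linarith
  have ale: "\<alpha> \<le> 0" unfolding adef using bge a5 by (simp add: mult_nonneg_nonpos)
  have lin: "R1*R2 = \<alpha> + \<beta>*R1"
  proof (cases "R1 = r1 \<and> R2 = r2")
    case True
    have hb: "\<beta>*(r1-r1') = r1*r2 - r1'*r2'" unfolding bdef using a2 by simp
    have "\<alpha> + \<beta>*r1 = r1'*r2' + \<beta>*(r1-r1')" unfolding adef by (simp add: algebra_simps)
    then show ?thesis using True hb by simp
  next
    case False then have "R1 = r1' \<and> R2 = r2'" using st by auto
    then show ?thesis unfolding adef by (simp add: algebra_simps)
  qed
  show ?thesis
  proof (cases "X = 0")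
    case True
    then have "R1 = 0" "r1' = 0" using z by auto
    then have "\<alpha> = 0" unfolding adef by simp
    then show ?thesis using True \<open>R1 = 0\<close> bge a3 by simp
  next
    case False
    then have Xp: "X > 0" using a1 a5 by linarith
    have "1/X - (2/\<mu> - X/\<mu>^2) = (\<mu> - X)^2/(X*\<mu>^2)" using Xp mu
      by (simp add: field_simps power2_eq_square)
    moreover have "(\<mu> - X)^2/(X*\<mu>^2) \<ge> 0" using Xp mu by simp
    ultimately have inv: "2/\<mu> - X/\<mu>^2 \<le> 1/X" by linarith
    have "\<alpha> * (1/X) \<le> \<alpha>*(2/\<mu> - X/\<mu>^2)" using mult_left_mono_neg[OF inv ale] .
    moreover have "R1*R2/X = \<alpha> * (1/X) + \<beta> + \<beta>*((R1 - X)*(1/X))" using lin Xp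
      by (simp add: field_simps)
    ultimately show ?thesis by linarith
  qed
qed

lemma cond_exp:
  assumes fin: "finite (set_pmf I)" and ne: "set_pmf I \<inter> Ev \<noteq> {}"
  shows "measure_pmf.expectation (cond_pmf I Ev) f
     = (\<Sum>x\<in>set_pmf I \<inter> Ev. pmf I x * f x) / (\<Sum>x\<in>set_pmf I \<inter> Ev. pmf I x)"
proof -
  have finE: "finite (set_pmf I \<inter> Ev)" using fin by blast
  have "measure_pmf.expectation (cond_pmf I Ev) f
        = (\<Sum>x\<in>set_pmf I \<inter> Ev. pmf (cond_pmf I Ev) x * f x)"
    using exp_fin[of "cond_pmf I Ev"] finE unfolding set_cond_pmf[OF ne] by blast
  also have "\<dots> = (\<Sum>x\<in>set_pmf I \<inter> Ev. (pmf I x * f x) / measure_pmf.prob I Ev)"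
    by (intro sum.cong refl) (simp add: pmf_cond[OF ne])
  also have "\<dots> = (\<Sum>x\<in>set_pmf I \<inter> Ev. pmf I x * f x) / measure_pmf.prob I Ev"
    by (rule sum_divide_distrib[symmetric])
  also have "measure_pmf.prob I Ev = (\<Sum>x\<in>set_pmf I \<inter> Ev. pmf I x)"
    using measure_Int_set_pmf[of I Ev] measure_measure_pmf_finite[OF finE] by (simp add: Int_commute)
  finally show ?thesis .
qed

lemma cond_full:
  assumes fin: "finite (set_pmf I)" and sub: "set_pmf I \<subseteq> Ev"
  shows "measure_pmf.expectation (cond_pmf I Ev) f = measure_pmf.expectation I (f :: _ \<Rightarrow> real)"
proof -
  have eq: "set_pmf I \<inter> Ev = set_pmf I" using sub by (rule Int_absorb2)
  have ne: "set_pmf I \<inter> Ev \<noteq> {}" unfolding eq by (rule set_pmf_not_empty)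
  have s1: "(\<Sum>x\<in>set_pmf I. pmf I x) = 1" using sum_pmf_eq_1[OF fin subset_refl] .
  show ?thesis by (simp only: cond_exp[OF fin ne] eq exp_fin[OF fin] s1 div_by_1)
qed

lemma cond_const:
  assumes fin: "finite (set_pmf I)" and ne: "set_pmf I \<inter> Ev \<noteq> {}"
    and c: "\<And>x. x \<in> set_pmf I \<Longrightarrow> x \<in> Ev \<Longrightarrow> f x = t"
  shows "measure_pmf.expectation (cond_pmf I Ev) f = (t::real)"
proof -
  have "(\<Sum>x\<in>set_pmf I \<inter> Ev. pmf I x * f x) = (\<Sum>x\<in>set_pmf I \<inter> Ev. t * pmf I x)"
    using c by (intro sum.cong refl) simp
  also have "\<dots> = t * (\<Sum>x\<in>set_pmf I \<inter> Ev. pmf I x)" by (simp add: sum_distrib_left)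
  finally have A: "(\<Sum>x\<in>set_pmf I \<inter> Ev. pmf I x * f x) = t * (\<Sum>x\<in>set_pmf I \<inter> Ev. pmf I x)" .
  obtain x0 where x0: "x0 \<in> set_pmf I \<inter> Ev" using ne by blast
  have "0 < (\<Sum>x\<in>set_pmf I \<inter> Ev. pmf I x)"
  proof (rule sum_pos2[OF _ x0])
    show "finite (set_pmf I \<inter> Ev)" using fin by blast
    show "0 < pmf I x0" using pmf_positive[OF IntD1[OF x0]] .
    show "0 \<le> pmf I x" for x by (rule pmf_nonneg)
  qed
  then show ?thesis unfolding cond_exp[OF fin ne] A by simp
qed

lemma main_bound:
  fixes p r1 r2 r1' r2' \<mu>1 :: real and I :: "point pmf"
  assumes mu: "\<mu>1 = p * r1 + (1 - p) * r1'"
    and p0: "0 < p" and p1: "p < 1"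
    and h1: "r1 \<in> {0..1}" and h2: "r2 \<in> {0..1}" and h3: "r1' \<in> {0..1}" and h4: "r2' \<in> {0..1}"
    and h5: "r1 \<ge> r1'" and h6: "r1 \<ge> r2" and h7: "r1 > 0"
    and h8: "r1' \<ge> r2'" and h9: "r2 \<ge> r2'"
    and inf: "info_structure (prior p r1 r2 r1' r2') I" and cal: "calibrated I"
  shows "revenue I \<le> (p * r1 * r2 + (1 - p) * r1' * r2') / \<mu>1"
proof -
  have fin: "finite (set_pmf I)" and mp: "map_pmf fst I = prior p r1 r2 r1' r2'"
    using inf unfolding info_structure_def by auto
  have r1'nn: "0 \<le> r1'" and r2'nn: "0 \<le> r2'" using h3 h4 by auto
  have mupos: "\<mu>1 > 0"
  proof -
    have "p * r1 > 0" using p0 h7 by simp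
    moreover have "(1 - p) * r1' \<ge> 0" using p1 r1'nn by simp
    ultimately show ?thesis unfolding mu by linarith
  qed
  have st: "fst x = (r1,r2) \<or> fst x = (r1',r2')" if "x \<in> set_pmf I" for x
  proof -
    have "fst x \<in> set_pmf (map_pmf fst I)" using that by simp
    then show ?thesis unfolding mp prior_set[OF p0 p1] by simp
  qed
  have ss: "(fst (fst x) = r1 \<and> snd (fst x) = r2) \<or> (fst (fst x) = r1' \<and> snd (fst x) = r2')"
    if "x \<in> set_pmf I" for x
    using st[OF that] by (cases "fst x") auto
  have R1lo: "\<forall>x\<in>set_pmf I. coord 1 (fst x) \<ge> r1'"
  proof
    fix x assume "x \<in> set_pmf I" then show "coord 1 (fst x) \<ge> r1'" using ss[of x] h5 by (auto simp: coord_def)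
  qed
  have R1hi: "\<forall>x\<in>set_pmf I. coord 1 (fst x) \<le> r1"
  proof
    fix x assume "x \<in> set_pmf I" then show "coord 1 (fst x) \<le> r1" using ss[of x] h5 by (auto simp: coord_def)
  qed
  have R1nn: "\<forall>x\<in>set_pmf I. coord 1 (fst x) \<ge> 0"
  proof
    fix x assume "x \<in> set_pmf I" then show "coord 1 (fst x) \<ge> 0" using ss[of x] h5 r1'nn by (auto simp: coord_def)
  qed
  have R2lo: "\<forall>x\<in>set_pmf I. coord 2 (fst x) \<ge> r2'"
  proof
    fix x assume "x \<in> set_pmf I" then show "coord 2 (fst x) \<ge> r2'" using ss[of x] h9 by (auto simp: coord_def)
  qed
  have R2hi: "\<forall>x\<in>set_pmf I. coord 2 (fst x) \<le> r2"
  proof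
    fix x assume "x \<in> set_pmf I" then show "coord 2 (fst x) \<le> r2" using ss[of x] h9 by (auto simp: coord_def)
  qed
  have Xlo: "r1' \<le> fst (snd x)" if x: "x \<in> set_pmf I" for x
    using calib_lower[OF fin cal _ x R1lo] by (simp add: coord_def)
  have Xhi: "fst (snd x) \<le> r1" if x: "x \<in> set_pmf I" for x
    using calib_upper[OF fin cal _ x R1hi] by (simp add: coord_def)
  have Ylo: "r2' \<le> snd (snd x)" if x: "x \<in> set_pmf I" for x
    using calib_lower[OF fin cal _ x R2lo] by (simp add: coord_def)
  have Yhi: "snd (snd x) \<le> r2" if x: "x \<in> set_pmf I" for x
    using calib_upper[OF fin cal _ x R2hi] by (simp add: coord_def)
  have X0: "fst (fst x) = 0" if x: "x \<in> set_pmf I" and z: "fst (snd x) = 0" for x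
    using calib_zero[OF fin cal _ x R1nn] z by (simp add: coord_def)

  define E where "E f = (\<Sum>x\<in>set_pmf I. pmf I x * f x)" for f :: "point \<Rightarrow> real"
  have E_add: "E (\<lambda>x. f x + g x) = E f + E g" for f g
    unfolding E_def by (simp add: distrib_left sum.distrib)
  have E_cmul: "E (\<lambda>x. c * f x) = c * E f" for c f
    unfolding E_def by (simp add: sum_distrib_left mult_ac)
  have s1: "(\<Sum>x\<in>set_pmf I. pmf I x) = 1" using sum_pmf_eq_1[OF fin subset_refl] .
  have E_const: "E (\<lambda>x. c) = c" for c
  proof -
    have "E (\<lambda>x. c) = (\<Sum>x\<in>set_pmf I. pmf I x) * c" unfolding E_def by (simp add: sum_distrib_right)
    then show ?thesis using s1 by simp
  qed
  have E_mono: "E f \<le> E g" if "\<And>x. x \<in> set_pmf I \<Longrightarrow> f x \<le> g x" for f g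
    unfolding E_def by (intro sum_mono mult_left_mono) (auto intro: that)
  have E_cong: "E f = E g" if "\<And>x. x \<in> set_pmf I \<Longrightarrow> f x = g x" for f g
    unfolding E_def by (intro sum.cong refl) (simp add: that)
  have E_prior: "E (\<lambda>x. h (fst x)) = p * h (r1,r2) + (1-p) * h (r1',r2')" for h
  proof -
    have "E (\<lambda>x. h (fst x)) = measure_pmf.expectation I (\<lambda>x. h (fst x))"
      unfolding E_def exp_fin[OF fin] ..
    also have "\<dots> = measure_pmf.expectation (map_pmf fst I) h" by simp
    also have "\<dots> = p * h (r1,r2) + (1-p) * h (r1',r2')" unfolding mp
      using prior_exp[of p r1 r2 r1' r2' h] p0 p1 by simp
    finally show ?thesis .
  qed
  have cal1: "E (\<lambda>x. (fst (fst x) - fst (snd x)) * h (fst (snd x))) = 0" for h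
    using calib_sum[OF fin cal, of 1 h] unfolding E_def by (simp add: coord_def)
  have cal2: "E (\<lambda>x. (snd (fst x) - snd (snd x)) * h (snd (snd x))) = 0" for h
    using calib_sum[OF fin cal, of 2 h] unfolding E_def by (simp add: coord_def)

  define Q where "Q x = fst (fst x) * snd (fst x) / fst (snd x)" for x :: point
  have rev_eq: "revenue I = E (\<lambda>x. outcome_revenue (fst x) (snd x))"
    unfolding revenue_def exp_fin[OF fin] E_def by (simp add: case_prod_beta)
  have step1: "revenue I \<le> E (\<lambda>x. Q x + (snd (snd x) - snd (fst x)))"
    unfolding rev_eq
  proof (rule E_mono)
    fix x assume x: "x \<in> set_pmf I"
    have "outcome_revenue (fst x) (snd x)
        = outcome_revenue (fst (fst x), snd (fst x)) (fst (snd x), snd (snd x))" by simp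
    also have "\<dots> \<le> fst (fst x) * snd (fst x) / fst (snd x) + snd (snd x) - snd (fst x)"
      by (rule rev_bound[OF ss[OF x] Xlo[OF x] Xhi[OF x] Ylo[OF x] Yhi[OF x] r2'nn h8 h6 h7 X0[OF x]])
    finally show "outcome_revenue (fst x) (snd x) \<le> Q x + (snd (snd x) - snd (fst x))"
      unfolding Q_def by simp
  qed
  have c2: "E (\<lambda>x. snd (fst x) - snd (snd x)) = 0" using cal2[of "\<lambda>_. 1"] by simp
  have c1: "E (\<lambda>x. fst (fst x) - fst (snd x)) = 0" using cal1[of "\<lambda>_. 1"] by simp
  have EY: "E (\<lambda>x. snd (snd x) - snd (fst x)) = 0"
  proof -
    have "E (\<lambda>x. snd (snd x) - snd (fst x)) = E (\<lambda>x. (-1) * (snd (fst x) - snd (snd x)))"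
      by (rule E_cong) simp
    also have "\<dots> = (-1) * E (\<lambda>x. snd (fst x) - snd (snd x))" by (rule E_cmul)
    finally show ?thesis using c2 by simp
  qed
  have step2: "revenue I \<le> E Q" using step1 unfolding E_add EY by simp

  show ?thesis
  proof (cases "r1' = r1")
    case True
    have "E Q = E (\<lambda>x. snd (fst x))"
    proof (rule E_cong)
      fix x assume x: "x \<in> set_pmf I"
      have "fst (snd x) = r1" using Xlo[OF x] Xhi[OF x] True by simp
      moreover have "fst (fst x) = r1" using ss[OF x] True by auto
      ultimately show "Q x = snd (fst x)" unfolding Q_def using h7 by simp
    qed
    also have "\<dots> = p * r2 + (1-p) * r2'" using E_prior[of snd] by simp
    also have "\<dots> = (p * r1 * r2 + (1 - p) * r1' * r2') / \<mu>1"
      using True h7 unfolding mu by (simp add: field_simps)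
    finally show ?thesis using step2 by simp
  next
    case False
    then have lt: "r1' < r1" using h5 by simp
    define \<beta> where "\<beta> = (r1*r2 - r1'*r2')/(r1-r1')"
    define \<alpha> where "\<alpha> = r1'*(r2' - \<beta>)"
    define W where "W x = (fst (fst x) - fst (snd x)) * (1 / fst (snd x))" for x :: point
    have "E Q \<le> E (\<lambda>x. (\<alpha>*(2/\<mu>1) + \<beta>) + ((-(\<alpha>/\<mu>1^2)) * fst (snd x) + \<beta> * W x))"
    proof (rule E_mono)
      fix x assume x: "x \<in> set_pmf I"
      have z: "fst (fst x) = 0 \<and> r1' = 0" if "fst (snd x) = 0"
      proof -
        have "fst (fst x) = 0" using X0[OF x that] .
        then show ?thesis using ss[OF x] h7 by auto
      qed
      have "Q x \<le> \<alpha>*(2/\<mu>1 - fst (snd x)/\<mu>1^2) + \<beta> + \<beta>*W x"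
        unfolding Q_def W_def
        by (rule ratio_bound[OF ss[OF x] Xlo[OF x] lt r2'nn h9 r1'nn mupos z \<beta>_def \<alpha>_def])
      also have "\<dots> = (\<alpha>*(2/\<mu>1) + \<beta>) + ((-(\<alpha>/\<mu>1^2)) * fst (snd x) + \<beta> * W x)"
        by (simp add: algebra_simps)
      finally show "Q x \<le> (\<alpha>*(2/\<mu>1) + \<beta>) + ((-(\<alpha>/\<mu>1^2)) * fst (snd x) + \<beta> * W x)" .
    qed
    also have "\<dots> = (\<alpha>*(2/\<mu>1) + \<beta>) + ((-(\<alpha>/\<mu>1^2)) * E (\<lambda>x. fst (snd x)) + \<beta> * E W)"
      unfolding E_add E_const E_cmul ..
    also have "E W = 0" unfolding W_def using cal1[of "\<lambda>t. 1 / t"] .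
    also have "E (\<lambda>x. fst (snd x)) = \<mu>1"
    proof -
      have "E (\<lambda>x. fst (snd x)) = E (\<lambda>x. fst (fst x) + (-1) * (fst (fst x) - fst (snd x)))"
        by (rule E_cong) simp
      also have "\<dots> = E (\<lambda>x. fst (fst x)) + (-1) * E (\<lambda>x. fst (fst x) - fst (snd x))"
        by (simp only: E_add E_cmul)
      also have "\<dots> = E (\<lambda>x. fst (fst x))" using c1 by simp
      also have "\<dots> = \<mu>1" using E_prior[of fst] unfolding mu by simp
      finally show ?thesis .
    qed
    also have "(\<alpha>*(2/\<mu>1) + \<beta>) + ((-(\<alpha>/\<mu>1^2)) * \<mu>1 + \<beta> * 0) = (\<alpha> + \<beta>*\<mu>1)/\<mu>1"
      using mupos by (simp add: field_simps power2_eq_square)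
    also have "\<alpha> + \<beta>*\<mu>1 = p * r1 * r2 + (1 - p) * r1' * r2'"
    proof -
      have hb: "\<beta>*(r1-r1') = r1*r2 - r1'*r2'" unfolding \<beta>_def using lt by simp
      have "\<alpha> + \<beta>*\<mu>1 = r1'*r2' + p*(\<beta>*(r1-r1'))" unfolding \<alpha>_def mu by (simp add: algebra_simps)
      then show ?thesis unfolding hb by (simp add: algebra_simps)
    qed
    finally show ?thesis using step2 by simp
  qed
qed

lemma main_attain:
  fixes p r1 r2 r1' r2' \<mu>1 :: real
  assumes mu: "\<mu>1 = p * r1 + (1 - p) * r1'"
    and p0: "0 < p" and p1: "p < 1"
    and h1: "r1 \<in> {0..1}" and h2: "r2 \<in> {0..1}" and h3: "r1' \<in> {0..1}" and h4: "r2' \<in> {0..1}"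
    and h5: "r1 \<ge> r1'" and h7: "r1 > 0" and h9: "r2 \<ge> r2'" and lt: "r2 < \<mu>1"
    and I0: "I0 = map_pmf (\<lambda>b. if b then ((r1, r2), (\<mu>1, r2)) else ((r1', r2'), (\<mu>1, r2')))
                      (bernoulli_pmf p)"
  shows "info_structure (prior p r1 r2 r1' r2') I0 \<and> calibrated I0 \<and>
               revenue I0 = (p * r1 * r2 + (1 - p) * r1' * r2') / \<mu>1"
proof -
  have sp: "set_pmf I0 = {((r1,r2),(\<mu>1,r2)), ((r1',r2'),(\<mu>1,r2'))}"
    unfolding I0 using p0 p1 by (auto simp: UNIV_bool)
  have fin: "finite (set_pmf I0)" unfolding sp by simp
  have mupos: "\<mu>1 > 0"
  proof -
    have "p * r1 > 0" using p0 h7 by simp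
    moreover have "(1 - p) * r1' \<ge> 0" using p1 h3 by simp
    ultimately show ?thesis unfolding mu by linarith
  qed
  have mu1: "\<mu>1 \<le> 1"
  proof -
    have "p * r1 \<le> p" using mult_left_mono[of r1 1 p] p0 h1 by simp
    moreover have "(1 - p) * r1' \<le> 1 - p" using mult_left_mono[of r1' 1 "1 - p"] p1 h3 by simp
    ultimately show ?thesis unfolding mu by linarith
  qed
  have info: "info_structure (prior p r1 r2 r1' r2') I0"
    unfolding info_structure_def
  proof (intro conjI)
    show "finite (set_pmf I0)" by (rule fin)
    show "\<forall>((a, b), c, d)\<in>set_pmf I0. a \<in> {0..1} \<and> b \<in> {0..1} \<and> c \<in> {0..1} \<and> d \<in> {0..1}"
      unfolding sp using h1 h2 h3 h4 mupos mu1 by auto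
    show "map_pmf fst I0 = prior p r1 r2 r1' r2'"
      unfolding I0 prior_def map_pmf_comp by (rule map_pmf_cong) auto
  qed
  have cal: "calibrated I0"
    unfolding calibrated_def
  proof (intro ballI allI impI)
    fix i :: nat and t :: real
    assume i: "i \<in> {1,2}" and pos: "measure_pmf.prob I0 {x. coord i (snd x) = t} > 0"
    define Ev :: "point set" where "Ev = {x. coord i (snd x) = t}"
    have ne: "set_pmf I0 \<inter> Ev \<noteq> {}"
    proof
      assume e: "set_pmf I0 \<inter> Ev = {}"
      have "measure_pmf.prob I0 Ev = measure_pmf.prob I0 (Ev \<inter> set_pmf I0)"
        by (rule measure_Int_set_pmf[symmetric])
      also have "Ev \<inter> set_pmf I0 = {}" using e by blast
      finally show False using pos unfolding Ev_def by simp
    qed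
    show "measure_pmf.expectation (cond_pmf I0 {x. coord i (snd x) = t}) (\<lambda>x. coord i (fst x)) = t"
    proof (cases "i = 1")
      case True
      obtain x0 where x0: "x0 \<in> set_pmf I0" "x0 \<in> Ev" using ne by blast
      have "coord i (snd x0) = \<mu>1" using x0(1) True unfolding sp by (auto simp: coord_def)
      then have t: "t = \<mu>1" using x0(2) unfolding Ev_def by simp
      have sub: "set_pmf I0 \<subseteq> Ev" unfolding sp Ev_def t using True by (auto simp: coord_def)
      have "measure_pmf.expectation (cond_pmf I0 Ev) (\<lambda>x. coord i (fst x))
          = measure_pmf.expectation I0 (\<lambda>x. coord i (fst x))" by (rule cond_full[OF fin sub])
      also have "\<dots> = r1 * p + r1' * (1 - p)" unfolding I0 using True p0 p1 by (simp add: coord_def)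
      also have "\<dots> = t" unfolding t mu by simp
      finally show ?thesis unfolding Ev_def .
    next
      case False
      then have i2: "i = 2" using i by simp
      have "measure_pmf.expectation (cond_pmf I0 Ev) (\<lambda>x. coord i (fst x)) = t"
      proof (rule cond_const[OF fin ne])
        fix x assume "x \<in> set_pmf I0" "x \<in> Ev"
        then show "coord i (fst x) = t" unfolding sp Ev_def using i2 by (auto simp: coord_def)
      qed
      then show ?thesis unfolding Ev_def .
    qed
  qed
  have o1: "outcome_revenue (r1, r2) (\<mu>1, r2) = r1 * (r2 / \<mu>1)"
    using or_gt[of r2 \<mu>1 r1 r2] lt mupos by simp
  have o2: "outcome_revenue (r1', r2') (\<mu>1, r2') = r1' * (r2' / \<mu>1)"
    using or_gt[of r2' \<mu>1 r1' r2'] lt h9 mupos by simp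
  have "revenue I0 = r1 * (r2 / \<mu>1) * p + r1' * (r2' / \<mu>1) * (1 - p)"
    unfolding revenue_def I0 using p0 p1 o1 o2 by simp
  also have "\<dots> = (p * r1 * r2 + (1 - p) * r1' * r2') / \<mu>1"
    using mupos by (simp add: field_simps)
  finally show ?thesis using info cal by simp
qed

theorem mainTheorem9:
  fixes p r1 r2 r1' r2' :: real
  defines "\<mu>1 \<equiv> p * r1 + (1 - p) * r1'"
  assumes "0 < p" "p < 1"
    and "r1 \<in> {0..1}" "r2 \<in> {0..1}" "r1' \<in> {0..1}" "r2' \<in> {0..1}"
    and "r1 \<ge> r1'" "r1 \<ge> r2" "r1 \<ge> r2'"
    and "r1 > 0"
    and "r1' \<ge> r2'" "r2 \<ge> r2'" "r2 \<le> \<mu>1"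
  shows "(\<forall>I. info_structure (prior p r1 r2 r1' r2') I \<and> calibrated I \<longrightarrow>
             revenue I \<le> (p * r1 * r2 + (1 - p) * r1' * r2') / \<mu>1)
       \<and> (r2 < \<mu>1 \<longrightarrow>
           (let I = map_pmf (\<lambda>b. if b then ((r1, r2), (\<mu>1, r2)) else ((r1', r2'), (\<mu>1, r2')))
                      (bernoulli_pmf p)
            in info_structure (prior p r1 r2 r1' r2') I \<and> calibrated I \<and>
               revenue I = (p * r1 * r2 + (1 - p) * r1' * r2') / \<mu>1))"
proof (intro conjI allI impI)
  fix I assume "info_structure (prior p r1 r2 r1' r2') I \<and> calibrated I"
  then show "revenue I \<le> (p * r1 * r2 + (1 - p) * r1' * r2') / \<mu>1"
    using main_bound[of \<mu>1 p r1 r1' r2 r2' I] assms by auto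
next
  assume lt: "r2 < \<mu>1"
  show "let I = map_pmf (\<lambda>b. if b then ((r1, r2), (\<mu>1, r2)) else ((r1', r2'), (\<mu>1, r2')))
                      (bernoulli_pmf p)
            in info_structure (prior p r1 r2 r1' r2') I \<and> calibrated I \<and>
               revenue I = (p * r1 * r2 + (1 - p) * r1' * r2') / \<mu>1"
    unfolding Let_def
    by (rule main_attain[OF \<mu>1_def[THEN meta_eq_to_obj_eq] assms(2-8) assms(11) assms(13) lt refl])
qed

end
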